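(* There is a Borel map $d:\{(u,v)\in[0,\infty]^{\mathbb N}\times[0,\infty]^{\mathbb N}\mid\sum_iu(i)=\sum_jv(j)\}\to[0,\infty]^{\mathbb N^2}$ such that for all $(u,v)$ in its domain and all $i,j\in\mathbb N$, $u(i)=\sum_jd(u,v)(i,j)$ and $v(j)=\sum_id(u,v)(i,j)$.
   Context: $[0,\infty]^{\mathbb N}$ and $[0,\infty]^{\mathbb N^2}$ carry their standard product Borel structures. *)

theory Defs
  imports "HOL-Probability.Probability"
begin

definition seqM :: "(nat \<Rightarrow> ennreal) measure" where
  "seqM = PiM UNIV (\<lambda>_. borel)"

definition arrM :: "(nat \<times> nat \<Rightarrow> ennreal) measure" where
  "arrM = PiM UNIV (\<lambda>_. borel)"

definition coupling_dom :: "((nat \<Rightarrow> ennreal) \<times> (nat \<Rightarrow> ennreal)) set" where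
  "coupling_dom = {(u, v). (\<Sum>i. u i) = (\<Sum>j. v j)}"

end

theory Submission imports Defs begin

definition P :: "(nat \<Rightarrow> ennreal) \<Rightarrow> nat \<Rightarrow> real" where
  "P a n = (\<Sum>k<n. enn2real (a k))"

definition cpl :: "(nat \<Rightarrow> ennreal) \<Rightarrow> (nat \<Rightarrow> ennreal) \<Rightarrow> nat \<Rightarrow> nat \<Rightarrow> ennreal" where
  "cpl a b m n = ennreal (min (P a (Suc m)) (P b (Suc n)) - max (P a m) (P b n))"

lemma P_nonneg: "0 \<le> P a n" unfolding P_def by (auto intro: sum_nonneg)
lemma P_mono: "m \<le> n \<Longrightarrow> P a m \<le> P a n"
  unfolding P_def by (intro sum_mono2) auto
lemma P_Suc: "P a (Suc n) = P a n + enn2real (a n)" unfolding P_def by simp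

lemma ennreal_P: "\<forall>k. a k \<noteq> \<top> \<Longrightarrow> ennreal (P a n) = (\<Sum>k<n. a k)"
  unfolding P_def by (subst sum_ennreal[symmetric]) (auto simp: ennreal_enn2real_if)

lemma cpl_sym: "cpl a b m n = cpl b a n m"
  unfolding cpl_def by (simp add: min.commute max.commute)

lemma cpl_row:
  assumes fa: "\<forall>k. a k \<noteq> \<top>" and fb: "\<forall>k. b k \<noteq> \<top>" and eq: "(\<Sum>k. a k) = (\<Sum>k. b k)"
  shows "(\<Sum>n. cpl a b m n) = a m"
proof -
  define X where "X = P a m"
  define Y where "Y = P a (Suc m)"
  define g where "g t = max 0 (min Y t - X)" for t
  have X0: "0 \<le> X" by (simp add: X_def P_nonneg)
  have XY: "X \<le> Y" unfolding X_def Y_def by (rule P_mono) simp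
  have gmono: "g (P b N) \<le> g (P b (Suc N))" for N
    using P_mono[of N "Suc N" b] unfolding g_def by (auto simp: min_def max_def)
  have step: "ennreal (min Y (P b (Suc N)) - max X (P b N)) = ennreal (g (P b (Suc N)) - g (P b N))" for N
  proof -
    have "V \<le> V' \<Longrightarrow> max 0 (min Y V' - max X V) = g V' - g V" for V V'
      using XY unfolding g_def by (auto simp: min_def max_def)
    from this[of "P b N" "P b (Suc N)"] P_mono[of N "Suc N" b]
    show ?thesis by (metis ennreal_max_0 le_SucI order_refl)
  qed
  have part: "(\<Sum>n<N. cpl a b m n) = ennreal (g (P b N))" for N
  proof (induction N)
    case 0 show ?case using X0 XY by (simp add: g_def P_def min_def max_def)
  next
    case (Suc N)
    have "(\<Sum>n<Suc N. cpl a b m n) = ennreal (g (P b N)) + ennreal (g (P b (Suc N)) - g (P b N))"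
      using Suc step[of N] by (simp add: cpl_def X_def Y_def)
    also have "\<dots> = ennreal (g (P b (Suc N)))"
      using gmono[of N] by (subst ennreal_plus[symmetric]) (auto simp: g_def)
    finally show ?case .
  qed
  have gform: "ennreal (g t) = min (ennreal Y) (ennreal t) - ennreal X" if "0 \<le> t" for t
    using that X0 XY by (simp add: g_def min_ennreal ennreal_minus)
  have lim1: "(\<lambda>N. \<Sum>n<N. cpl a b m n) \<longlonglongrightarrow> (\<Sum>n. cpl a b m n)"
    by (intro summable_LIMSEQ) simp
  have "(\<lambda>N. ennreal (P b N)) \<longlonglongrightarrow> (\<Sum>k. b k)"
    using fb by (simp add: ennreal_P summable_LIMSEQ)
  then have "(\<lambda>N. min (ennreal Y) (ennreal (P b N)) - ennreal X) \<longlonglongrightarrow> min (ennreal Y) (\<Sum>k. b k) - ennreal X"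
  proof (intro tendsto_diff_ennreal tendsto_min tendsto_const)
    show "min (ennreal Y) (\<Sum>k. b k) \<noteq> \<top>"
      using min.cobounded1[of "ennreal Y" "\<Sum>k. b k"] by (metis ennreal_neq_top top.extremum_uniqueI)
  qed auto
  then have lim2: "(\<lambda>N. \<Sum>n<N. cpl a b m n) \<longlonglongrightarrow> min (ennreal Y) (\<Sum>k. b k) - ennreal X"
    by (simp add: part gform P_nonneg)
  have "(\<Sum>n. cpl a b m n) = min (ennreal Y) (\<Sum>k. b k) - ennreal X"
    using LIMSEQ_unique[OF lim1 lim2] .
  also have "ennreal Y \<le> (\<Sum>k. b k)"
  proof -
    have "ennreal Y = (\<Sum>k<Suc m. a k)" unfolding Y_def using fa by (simp add: ennreal_P)
    also have "\<dots> \<le> (\<Sum>k. a k)" by (rule sum_le_suminf) auto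
    finally show ?thesis using eq by simp
  qed
  then have "min (ennreal Y) (\<Sum>k. b k) = ennreal Y" by simp
  also have "ennreal Y - ennreal X = a m"
    using X0 fa unfolding X_def Y_def by (simp add: P_Suc ennreal_minus ennreal_enn2real_if)
  finally show ?thesis by simp
qed

lemma cpl_col:
  assumes fa: "\<forall>k. a k \<noteq> \<top>" and fb: "\<forall>k. b k \<noteq> \<top>" and eq: "(\<Sum>k. a k) = (\<Sum>k. b k)"
  shows "(\<Sum>m. cpl a b m n) = b n"
  using cpl_row[of b a n] assms by (simp add: cpl_sym)


definition spl :: "(nat \<Rightarrow> ennreal) \<Rightarrow> nat \<Rightarrow> ennreal" where
  "spl u k = (if u (fst (prod_decode k)) = \<top> then 1
     else if snd (prod_decode k) = 0 then u (fst (prod_decode k)) else 0)"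

definition D :: "(nat \<Rightarrow> ennreal) \<times> (nat \<Rightarrow> ennreal) \<Rightarrow> nat \<times> nat \<Rightarrow> ennreal" where
  "D p = (\<lambda>(i,j). \<Sum>l. \<Sum>l'. cpl (spl (fst p)) (spl (snd p)) (prod_encode (i,l)) (prod_encode (j,l')))"

lemma meas_D: "D \<in> seqM \<Otimes>\<^sub>M seqM \<rightarrow>\<^sub>M arrM"
  unfolding arrM_def
proof (rule measurable_PiM_single')
  fix ij :: "nat \<times> nat"
  obtain i j where ij: "ij = (i,j)" by (cases ij)
  show "(\<lambda>p. D p ij) \<in> borel_measurable (seqM \<Otimes>\<^sub>M seqM)"
    unfolding ij D_def cpl_def P_def spl_def seqM_def by measurable
qed (auto simp: PiE_def)


lemma suminf_swap_ennreal: "(\<Sum>i. \<Sum>j. f i j :: ennreal) = (\<Sum>j. \<Sum>i. f i j)"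
proof -
  interpret pair_sigma_finite "count_space (UNIV::nat set)" "count_space (UNIV::nat set)"
    by (intro pair_sigma_finite.intro sigma_finite_measure_count_space_countable) auto
  have m: "(\<lambda>(x,y). f x y) \<in> borel_measurable (count_space UNIV \<Otimes>\<^sub>M count_space UNIV)"
    by (simp add: pair_measure_countable)
  have "(\<Sum>i. \<Sum>j. f i j) = (\<integral>\<^sup>+i. \<integral>\<^sup>+j. f i j \<partial>count_space UNIV \<partial>count_space UNIV)"
    by (simp add: nn_integral_count_space_nat)
  also have "\<dots> = (\<integral>\<^sup>+j. \<integral>\<^sup>+i. f i j \<partial>count_space UNIV \<partial>count_space UNIV)"
    using Fubini'[OF m] by simp
  also have "\<dots> = (\<Sum>j. \<Sum>i. f i j)"
    by (simp add: nn_integral_count_space_nat)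
  finally show ?thesis .
qed

lemma reindex2: "(\<Sum>j. \<Sum>l. f (prod_encode (j,l))) = (\<Sum>n. f n :: ennreal)"
  using suminf_ennreal_2dimen[of "\<lambda>j. \<Sum>l. f (prod_encode (j,l))" "\<lambda>(j,l). f (prod_encode (j,l))"]
  by simp

lemma spl_fin: "spl u k \<noteq> \<top>" unfolding spl_def by auto

lemma spl_inner: "(\<Sum>l. spl u (prod_encode (i,l))) = u i"
proof (cases "u i = \<top>")
  case True
  have "(\<Sum>l::nat. ennreal 1) = \<top>"
    by (rule summable_iff_suminf_neq_top) (auto simp: summable_const_iff)
  then show ?thesis using True by (simp add: spl_def)
next
  case False
  have "(\<Sum>l. spl u (prod_encode (i,l))) = (\<Sum>l\<in>{0}. spl u (prod_encode (i,l)))"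
    by (rule suminf_finite) (auto simp: spl_def False)
  then show ?thesis by (simp add: spl_def False)
qed

lemma spl_total: "(\<Sum>k. spl u k) = (\<Sum>i. u i)"
  using reindex2[of "spl u"] by (simp add: spl_inner)

lemma D_row: assumes "(\<Sum>i. u i) = (\<Sum>j. v j)" shows "(\<Sum>j. D (u,v) (i,j)) = u i"
proof -
  let ?c = "cpl (spl u) (spl v)"
  have eq: "(\<Sum>k. spl u k) = (\<Sum>k. spl v k)" using assms by (simp add: spl_total)
  have "(\<Sum>j. D (u,v) (i,j)) = (\<Sum>j. \<Sum>l. \<Sum>l'. ?c (prod_encode (i,l)) (prod_encode (j,l')))"
    by (simp add: D_def)
  also have "\<dots> = (\<Sum>l. \<Sum>j. \<Sum>l'. ?c (prod_encode (i,l)) (prod_encode (j,l')))"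
    by (rule suminf_swap_ennreal)
  also have "\<dots> = (\<Sum>l. \<Sum>n. ?c (prod_encode (i,l)) n)"
    by (simp add: reindex2)
  also have "\<dots> = (\<Sum>l. spl u (prod_encode (i,l)))"
    using cpl_row[of "spl u" "spl v"] eq spl_fin by simp
  also have "\<dots> = u i" by (rule spl_inner)
  finally show ?thesis .
qed

lemma D_col: assumes "(\<Sum>i. u i) = (\<Sum>j. v j)" shows "(\<Sum>i. D (u,v) (i,j)) = v j"
proof -
  let ?c = "cpl (spl u) (spl v)"
  have eq: "(\<Sum>k. spl u k) = (\<Sum>k. spl v k)" using assms by (simp add: spl_total)
  have "(\<Sum>i. D (u,v) (i,j)) = (\<Sum>i. \<Sum>l. \<Sum>l'. ?c (prod_encode (i,l)) (prod_encode (j,l')))"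
    by (simp add: D_def)
  also have "\<dots> = (\<Sum>i. \<Sum>l'. \<Sum>l. ?c (prod_encode (i,l)) (prod_encode (j,l')))"
    by (subst suminf_swap_ennreal) simp
  also have "\<dots> = (\<Sum>l'. \<Sum>i. \<Sum>l. ?c (prod_encode (i,l)) (prod_encode (j,l')))"
    by (rule suminf_swap_ennreal)
  also have "\<dots> = (\<Sum>l'. \<Sum>m. ?c m (prod_encode (j,l')))"
    by (simp add: reindex2[of "\<lambda>m. ?c m _"])
  also have "\<dots> = (\<Sum>l'. spl v (prod_encode (j,l')))"
    using cpl_col[of "spl u" "spl v"] eq spl_fin by simp
  also have "\<dots> = v j" by (rule spl_inner)
  finally show ?thesis .
qed

theorem lemma4p17:
  shows "\<exists>d. d \<in> restrict_space (seqM \<Otimes>\<^sub>M seqM) coupling_dom \<rightarrow>\<^sub>M arrM \<and>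
    (\<forall>u v. (u, v) \<in> coupling_dom \<longrightarrow>
       (\<forall>i. u i = (\<Sum>j. d (u, v) (i, j))) \<and> (\<forall>j. v j = (\<Sum>i. d (u, v) (i, j))))"
  by (intro exI[of _ D] conjI allI impI measurable_restrict_space1 meas_D)
     (auto simp: coupling_dom_def D_row D_col)

end
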